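(* There is an absolute constant $C$ such that for every countable $X$, $f:X^n\to\{0,1\}$, $\varepsilon,\eta\in(0,1)$, distribution $\mathcal D$ on $X$, and integer $m\ge Cn^2/\varepsilon^2$, setting $f'=f\circ\Phi_{m\to n}$, $$\big|\mathrm{AdaptiveAddMax}_\eta(f',\mathcal D)-\mathrm{BinomialMax}_\eta(f',\mathcal D)\big|\le\varepsilon.$$
   Context: $\Phi_{m\to n}$ outputs the entries of its input $S\in X^m$ at a uniformly random sequence of $n$ distinct indices. For $S\in X^{\lceil(1-\eta)m\rceil}$, $\mathrm{add}_\eta(S)$ is the set of samples in $X^m$ obtained by adding $\lfloor\eta m\rfloor$ arbitrary points to $S$ and arbitrarily permuting; $\mathrm{AdaptiveAddMax}_\eta(g,\mathcal D)=\mathbb E_{S\sim\mathcal D^{\lceil(1-\eta)m\rceil}}[\sup_{S'\in\mathrm{add}_\eta(S)}\mathbb E[g(S')]]$ for randomized $g:X^m\to\{0,1\}$. For a sample $S$ with $|S|\le m$, $\mathrm{complete}_m(S)$ is the set of samples in $X^m$ obtained by adding $m-|S|$ arbitrary points to $S$ and arbitrarily permuting; $\mathrm{BinomialMax}_\eta(g,\mathcal D)=\mathbb E_{z\sim\mathrm{Bin}(m,1-\eta)}\mathbb E_{S\sim\mathcal D^{z}}[\sup_{S'\in\mathrm{complete}_m(S)}\mathbb E[g(S')]]$. *)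

theory Defs
  imports "HOL-Probability.Probability"
begin

text \<open>Samples in X^m are lists of length m. A randomized test g : X^m -> {0,1}
  is represented by its expectation function  S |-> E[g(S)]  (a real in [0,1]).\<close>

definition phi_indices :: "nat \<Rightarrow> nat \<Rightarrow> nat list pmf" where
  "phi_indices m n = pmf_of_set {is. length is = n \<and> distinct is \<and> set is \<subseteq> {..<m}}"

definition compose_phi :: "('a list \<Rightarrow> bool) \<Rightarrow> nat \<Rightarrow> 'a list \<Rightarrow> real" where
  "compose_phi f n S =
     measure_pmf.expectation (phi_indices (length S) n) (\<lambda>is. of_bool (f (map (\<lambda>i. S ! i) is)))"

definition add_set :: "'a set \<Rightarrow> real \<Rightarrow> nat \<Rightarrow> 'a list \<Rightarrow> 'a list set" where
  "add_set X \<eta> m S = {S'. \<exists>T. set T \<subseteq> X \<and> length T = nat \<lfloor>\<eta> * real m\<rfloor> \<and> mset S' = mset S + mset T}"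

definition complete_set :: "'a set \<Rightarrow> nat \<Rightarrow> 'a list \<Rightarrow> 'a list set" where
  "complete_set X m S = {S'. \<exists>T. set T \<subseteq> X \<and> length T = m - length S \<and> mset S' = mset S + mset T}"

definition AdaptiveAddMax :: "'a set \<Rightarrow> real \<Rightarrow> nat \<Rightarrow> ('a list \<Rightarrow> real) \<Rightarrow> 'a pmf \<Rightarrow> real" where
  "AdaptiveAddMax X \<eta> m g D =
     measure_pmf.expectation (replicate_pmf (nat \<lceil>(1 - \<eta>) * real m\<rceil>) D)
       (\<lambda>S. SUP S'\<in>add_set X \<eta> m S. g S')"

definition BinomialMax :: "'a set \<Rightarrow> real \<Rightarrow> nat \<Rightarrow> ('a list \<Rightarrow> real) \<Rightarrow> 'a pmf \<Rightarrow> real" where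
  "BinomialMax X \<eta> m g D =
     measure_pmf.expectation (binomial_pmf m (1 - \<eta>))
       (\<lambda>z. measure_pmf.expectation (replicate_pmf z D)
              (\<lambda>S. SUP S'\<in>complete_set X m S. g S'))"

end

theory Submission
  imports Defs "HOL-Combinatorics.List_Permutation"
begin


definition Aset :: "nat \<Rightarrow> nat \<Rightarrow> nat list set" where
  "Aset m n = {is. length is = n \<and> distinct is \<and> set is \<subseteq> {..<m}}"

lemma Aset_finite: "finite (Aset m n)"
proof -
  have "Aset m n \<subseteq> {xs. set xs \<subseteq> {..<m} \<and> length xs = n}" by (auto simp: Aset_def)
  thus ?thesis by (rule finite_subset) (simp add: finite_lists_length_eq)
qed

lemma Aset_ne: "n \<le> m \<Longrightarrow> Aset m n \<noteq> {}"
  by (auto simp: Aset_def intro!: exI[of _ "[0..<n]"])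

lemma card_Aset_pos: "n \<le> m \<Longrightarrow> card (Aset m n) > 0"
  using Aset_finite Aset_ne by (simp add: card_gt_0_iff)

lemma compose_phi_eq:
  assumes "length S = m" "n \<le> m"
  shows "compose_phi f n S = (\<Sum>is\<in>Aset m n. of_bool (f (map (\<lambda>i. S ! i) is))) / card (Aset m n)"
  using assms Aset_finite Aset_ne
  by (simp add: compose_phi_def phi_indices_def Aset_def[symmetric] integral_pmf_of_set)

lemma compose_phi_bounds:
  assumes "length S = m" "n \<le> m"
  shows "0 \<le> compose_phi f n S \<and> compose_phi f n S \<le> 1"
proof -
  have "(\<Sum>is\<in>Aset m n. of_bool (f (map (\<lambda>i. S ! i) is)) :: real) \<le> (\<Sum>is\<in>Aset m n. 1)"
    by (rule sum_mono) simp
  hence "(\<Sum>is\<in>Aset m n. of_bool (f (map (\<lambda>i. S ! i) is)) :: real) \<le> card (Aset m n)" by simp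
  moreover have "0 \<le> (\<Sum>is\<in>Aset m n. of_bool (f (map (\<lambda>i. S ! i) is)) :: real)"
    by (rule sum_nonneg) simp
  ultimately show ?thesis using compose_phi_eq[OF assms] card_Aset_pos[OF assms(2)]
    by (simp add: divide_le_eq_1)
qed

lemma count_sym_le:
  assumes "i < m" "j < m"
  shows "card {is\<in>Aset m n. i \<in> set is} \<le> card {is\<in>Aset m n. j \<in> set is}"
proof -
  define t where "t = (\<lambda>k::nat. if k = i then j else if k = j then i else k)"
  have inj: "inj t" unfolding t_def by (auto simp: inj_def)
  have "inj_on (map t) {is\<in>Aset m n. i \<in> set is}"
    using inj by (simp add: inj_on_def inj_map_eq_map)
  moreover have "map t ` {is\<in>Aset m n. i \<in> set is} \<subseteq> {is\<in>Aset m n. j \<in> set is}"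
  proof
    fix ys assume "ys \<in> map t ` {is\<in>Aset m n. i \<in> set is}"
    then obtain xs where xs: "xs \<in> Aset m n" "i \<in> set xs" "ys = map t xs" by auto
    have "distinct ys" using xs inj by (simp add: Aset_def distinct_map inj_on_subset[OF inj])
    moreover have "set ys \<subseteq> {..<m}" using xs assms by (auto simp: Aset_def t_def)
    moreover have "j \<in> set ys" using xs by (auto simp: t_def)
    ultimately show "ys \<in> {is\<in>Aset m n. j \<in> set is}" using xs by (simp add: Aset_def)
  qed
  ultimately show ?thesis
    by (rule card_inj_on_le) (use Aset_finite in simp)
qed

lemma count_sum:
  "(\<Sum>i<m. card {is\<in>Aset m n. i \<in> set is}) = card (Aset m n) * n"
proof -
  have c: "card {is\<in>Aset m n. i \<in> set is} = (\<Sum>is\<in>Aset m n. if i \<in> set is then 1 else 0)" for i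
  proof -
    have "card {is\<in>Aset m n. i \<in> set is} = (\<Sum>is\<in>{is\<in>Aset m n. i \<in> set is}. (1::nat))"
      by (rule card_eq_sum)
    also have "\<dots> = (\<Sum>is\<in>Aset m n. if i \<in> set is then 1 else 0)"
      by (rule sum.inter_filter[OF Aset_finite])
    finally show ?thesis .
  qed
  have "(\<Sum>i<m. card {is\<in>Aset m n. i \<in> set is}) = (\<Sum>i<m. \<Sum>is\<in>Aset m n. if i \<in> set is then 1 else 0)"
    by (rule sum.cong[OF refl c])
  also have "\<dots> = (\<Sum>is\<in>Aset m n. \<Sum>i<m. if i \<in> set is then 1 else 0)"
    by (rule sum.swap)
  also have "\<dots> = (\<Sum>is\<in>Aset m n. n)"
  proof (rule sum.cong[OF refl])
    fix xs assume "xs \<in> Aset m n"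
    hence eq: "{i\<in>{..<m}. i \<in> set xs} = set xs" and cd: "card (set xs) = n"
      by (auto simp: Aset_def distinct_card)
    have "(\<Sum>i<m. if i \<in> set xs then 1 else 0) = (\<Sum>i\<in>{i\<in>{..<m}. i \<in> set xs}. (1::nat))"
      by (rule sum.inter_filter[symmetric]) simp
    also have "\<dots> = card (set xs)" unfolding eq by simp
    finally show "(\<Sum>i<m. if i \<in> set xs then 1 else 0) = n" using cd by simp
  qed
  finally show ?thesis by simp
qed

lemma count_each:
  assumes "i < m"
  shows "real (card {is\<in>Aset m n. i \<in> set is}) = real (card (Aset m n)) * n / m"
proof -
  have "\<And>j. j < m \<Longrightarrow> card {is\<in>Aset m n. j \<in> set is} = card {is\<in>Aset m n. i \<in> set is}"
    using count_sym_le assms by (meson antisym)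
  hence "(\<Sum>j<m. card {is\<in>Aset m n. j \<in> set is}) = m * card {is\<in>Aset m n. i \<in> set is}"
    by simp
  hence "m * card {is\<in>Aset m n. i \<in> set is} = card (Aset m n) * n" using count_sum by simp
  hence "real m * card {is\<in>Aset m n. i \<in> set is} = real (card (Aset m n)) * n"
    by (metis of_nat_mult)
  thus ?thesis using assms by (simp add: field_simps)
qed

lemma hit_bound:
  assumes "K \<subseteq> {..<m}"
  shows "real (card {is\<in>Aset m n. set is \<inter> K \<noteq> {}}) \<le> card K * (real (card (Aset m n)) * n / m)"
proof -
  have fin: "finite K" using assms finite_subset by blast
  have e: "{is\<in>Aset m n. set is \<inter> K \<noteq> {}} = (\<Union>i\<in>K. {is\<in>Aset m n. i \<in> set is})" by blast
  have "card {is\<in>Aset m n. set is \<inter> K \<noteq> {}} \<le> (\<Sum>i\<in>K. card {is\<in>Aset m n. i \<in> set is})"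
    unfolding e by (rule card_UN_le[OF fin])
  hence "real (card {is\<in>Aset m n. set is \<inter> K \<noteq> {}}) \<le> real (\<Sum>i\<in>K. card {is\<in>Aset m n. i \<in> set is})"
    by (simp only: of_nat_le_iff)
  also have "\<dots> = (\<Sum>i\<in>K. real (card {is\<in>Aset m n. i \<in> set is}))" by (rule of_nat_sum)
  also have "\<dots> = (\<Sum>i\<in>K. real (card (Aset m n)) * n / m)"
    using assms by (intro sum.cong refl count_each) auto
  finally show ?thesis by simp
qed

lemma hamming:
  assumes "length S1 = m" "length S2 = m" "n \<le> m" "K \<subseteq> {..<m}"
    and eq: "\<And>i. i < m \<Longrightarrow> i \<notin> K \<Longrightarrow> S1 ! i = S2 ! i"
  shows "\<bar>compose_phi f n S1 - compose_phi f n S2\<bar> \<le> card K * n / m"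
proof -
  let ?A = "Aset m n"
  let ?a = "\<lambda>is. of_bool (f (map (\<lambda>i. S1 ! i) is)) :: real"
  let ?b = "\<lambda>is. of_bool (f (map (\<lambda>i. S2 ! i) is)) :: real"
  have cpos: "real (card ?A) > 0" using card_Aset_pos[OF assms(3)] by simp
  have "\<bar>(\<Sum>is\<in>?A. ?a is) - (\<Sum>is\<in>?A. ?b is)\<bar> = \<bar>\<Sum>is\<in>?A. ?a is - ?b is\<bar>"
    by (simp add: sum_subtractf)
  also have "\<dots> \<le> (\<Sum>is\<in>?A. \<bar>?a is - ?b is\<bar>)" by (rule sum_abs)
  also have "\<dots> \<le> (\<Sum>is\<in>?A. if set is \<inter> K \<noteq> {} then 1 else 0)"
  proof (rule sum_mono)
    fix xs assume xs: "xs \<in> ?A"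
    show "\<bar>?a xs - ?b xs\<bar> \<le> (if set xs \<inter> K \<noteq> {} then 1 else 0)"
    proof (cases "set xs \<inter> K \<noteq> {}")
      case False
      have meq: "map (\<lambda>i. S1 ! i) xs = map (\<lambda>i. S2 ! i) xs"
        by (intro map_cong refl) (use xs eq False in \<open>auto simp: Aset_def\<close>)
      show ?thesis unfolding meq using False by simp
    qed simp
  qed
  also have "\<dots> = real (card {is\<in>?A. set is \<inter> K \<noteq> {}})"
    using Aset_finite by (simp add: sum.inter_filter[symmetric])
  also have "\<dots> \<le> card K * (real (card ?A) * n / m)" by (rule hit_bound[OF assms(4)])
  finally have H: "\<bar>(\<Sum>is\<in>?A. ?a is) - (\<Sum>is\<in>?A. ?b is)\<bar> \<le> card K * (real (card ?A) * n / m)" .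
  have "\<bar>(\<Sum>is\<in>?A. ?a is) - (\<Sum>is\<in>?A. ?b is)\<bar> / card ?A \<le> card K * (real (card ?A) * n / m) / card ?A"
    using cpos H by (intro divide_right_mono) auto
  also have "\<dots> = card K * n / m" using cpos by simp
  finally show ?thesis
    using compose_phi_eq[OF assms(1,3)] compose_phi_eq[OF assms(2,3)] cpos
    by (simp add: diff_divide_distrib[symmetric])
qed

lemma perm_inv:
  assumes "mset S1 = mset S2" "length S1 = m" "n \<le> m"
  shows "compose_phi f n S1 = compose_phi f n S2"
proof -
  have l2: "length S2 = m" using assms by (metis mset_eq_length)
  obtain p where p: "bij_betw p {..<length S1} {..<length S2}" "\<forall>i<length S1. S1 ! i = S2 ! (p i)"
    using permutation_Ex_bij[of S1 S2] assms(1) by blast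
  have pinj: "inj_on p {..<m}" using p assms(2) by (simp add: bij_betw_def)
  have pim: "p ` {..<m} = {..<m}" using p assms(2) l2 by (simp add: bij_betw_def)
  have inj: "inj_on (map p) (Aset m n)"
  proof (rule inj_onI)
    fix xs ys assume "xs \<in> Aset m n" "ys \<in> Aset m n" "map p xs = map p ys"
    thus "xs = ys" using pinj
      by (simp add: Aset_def) (metis (no_types) inj_on_map_eq_map inj_on_subset le_sup_iff set_union)
  qed
  have pm: "\<And>x. x < m \<Longrightarrow> p x < m" using pim by auto
  have sub: "map p ` Aset m n \<subseteq> Aset m n"
  proof
    fix ys assume "ys \<in> map p ` Aset m n"
    then obtain xs where xs: "xs \<in> Aset m n" "ys = map p xs" by auto
    have "set xs \<subseteq> {..<m}" using xs by (simp add: Aset_def)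
    hence "set ys \<subseteq> {..<m}" using xs pm by auto
    moreover have "distinct ys" using xs pinj by (auto simp: Aset_def distinct_map inj_on_subset)
    ultimately show "ys \<in> Aset m n" using xs by (simp add: Aset_def)
  qed
  have img: "map p ` Aset m n = Aset m n"
    by (rule card_subset_eq[OF Aset_finite sub]) (simp add: card_image[OF inj])
  have "(\<Sum>is\<in>Aset m n. of_bool (f (map (\<lambda>i. S1 ! i) is)) :: real)
      = (\<Sum>is\<in>Aset m n. of_bool (f (map (\<lambda>i. S2 ! i) (map p is))))"
  proof (intro sum.cong refl)
    fix xs assume "xs \<in> Aset m n"
    hence "map (\<lambda>i. S1 ! i) xs = map (\<lambda>i. S2 ! i) (map p xs)"
      using p assms(2) by (auto simp: Aset_def)
    thus "of_bool (f (map (\<lambda>i. S1 ! i) xs)) = (of_bool (f (map (\<lambda>i. S2 ! i) (map p xs))) :: real)"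
      by (simp only:)
  qed
  also have "\<dots> = (\<Sum>is\<in>map p ` Aset m n. of_bool (f (map (\<lambda>i. S2 ! i) is)))"
    by (simp add: sum.reindex[OF inj])
  finally show ?thesis using compose_phi_eq[OF assms(2,3)] compose_phi_eq[OF l2 assms(3)] img by simp
qed

definition V :: "'a set \<Rightarrow> nat \<Rightarrow> ('a list \<Rightarrow> real) \<Rightarrow> 'a list \<Rightarrow> real" where
  "V X m g S = (SUP S'\<in>complete_set X m S. g S')"

lemma cs_length:
  assumes "S' \<in> complete_set X m S" "length S \<le> m" shows "length S' = m"
proof -
  obtain T where T: "length T = m - length S" "mset S' = mset S + mset T"
    using assms(1) unfolding complete_set_def by blast
  have "length S' = size (mset S')" by simp
  also have "\<dots> = length S + length T" unfolding T(2) by simp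
  finally show ?thesis using T(1) assms(2) by simp
qed

lemma cs_ne: "X \<noteq> {} \<Longrightarrow> set S \<subseteq> X \<Longrightarrow> complete_set X m S \<noteq> {}"
proof -
  assume "X \<noteq> {}" "set S \<subseteq> X"
  then obtain x where "x \<in> X" by auto
  thus ?thesis unfolding complete_set_def
    by (intro ex_in_conv[THEN iffD1] exI[of _ "S @ replicate (m - length S) x"] CollectI
        exI[of _ "replicate (m - length S) x"]) auto
qed

lemma g_bounds: "length S' = m \<Longrightarrow> n \<le> m \<Longrightarrow> 0 \<le> compose_phi f n S' \<and> compose_phi f n S' \<le> 1"
  by (rule compose_phi_bounds)

lemma cs_bdd: "length S \<le> m \<Longrightarrow> n \<le> m \<Longrightarrow> bdd_above (compose_phi f n ` complete_set X m S)"
  by (rule bdd_aboveI[of _ 1]) (auto dest: cs_length g_bounds)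

lemma V_bounds:
  assumes "X \<noteq> {}" "set S \<subseteq> X" "length S \<le> m" "n \<le> m"
  shows "0 \<le> V X m (compose_phi f n) S \<and> V X m (compose_phi f n) S \<le> 1"
proof
  obtain S' where S': "S' \<in> complete_set X m S" using cs_ne[OF assms(1,2)] by blast
  have "0 \<le> compose_phi f n S'" using g_bounds cs_length[OF S' assms(3)] assms(4) by blast
  also have "\<dots> \<le> V X m (compose_phi f n) S"
    unfolding V_def by (rule cSUP_upper[OF S' cs_bdd[OF assms(3,4)]])
  finally show "0 \<le> V X m (compose_phi f n) S" .
  show "V X m (compose_phi f n) S \<le> 1"
    unfolding V_def using cs_ne[OF assms(1,2)]
    by (rule cSUP_least) (use g_bounds cs_length assms in blast)
qed

lemma cs_mono:
  assumes "set R \<subseteq> X" "length S + length R \<le> m"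
  shows "complete_set X m (S @ R) \<subseteq> complete_set X m S"
proof
  fix S' assume "S' \<in> complete_set X m (S @ R)"
  then obtain T where T: "set T \<subseteq> X" "length T = m - length (S @ R)" "mset S' = mset (S @ R) + mset T"
    by (auto simp: complete_set_def)
  show "S' \<in> complete_set X m S" unfolding complete_set_def
    by (intro CollectI exI[of _ "R @ T"]) (use T assms in auto)
qed

lemma approx:
  assumes S': "S' \<in> complete_set X m S" and "set R \<subseteq> X" "length S + length R \<le> m" "n \<le> m"
  shows "\<exists>S''\<in>complete_set X m (S @ R). compose_phi f n S' \<le> compose_phi f n S'' + length R * n / m"
proof -
  obtain T where T: "set T \<subseteq> X" "length T = m - length S" "mset S' = mset S + mset T"
    using S' by (auto simp: complete_set_def)
  define S'' where "S'' = S @ R @ drop (length R) T"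
  have S''in: "S'' \<in> complete_set X m (S @ R)" unfolding complete_set_def S''_def
    by (intro CollectI exI[of _ "drop (length R) T"]) (use T assms in \<open>auto dest: in_set_dropD\<close>)
  have e1: "compose_phi f n S' = compose_phi f n (S @ T)"
    by (rule perm_inv[of _ _ m]) (use T assms cs_length[OF S'] in auto)
  have e2: "\<bar>compose_phi f n (S @ T) - compose_phi f n S''\<bar> \<le> card {length S..<length S + length R} * n / m"
  proof (rule hamming)
    fix i assume "i < m" "i \<notin> {length S..<length S + length R}"
    thus "(S @ T) ! i = S'' ! i" unfolding S''_def using T assms
      by (auto simp: nth_append)
  qed (use T assms in \<open>auto simp: S''_def\<close>)
  have "card {length S..<length S + length R} = length R" by simp
  hence "compose_phi f n S' \<le> compose_phi f n S'' + length R * n / m" using e1 e2 by simp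
  thus ?thesis using S''in by blast
qed

lemma V_diff:
  assumes "X \<noteq> {}" "set (S @ R) \<subseteq> X" "length (S @ R) \<le> m" "n \<le> m"
  shows "V X m (compose_phi f n) (S @ R) \<le> V X m (compose_phi f n) S \<and>
         V X m (compose_phi f n) S \<le> V X m (compose_phi f n) (S @ R) + length R * n / m"
proof
  have ne: "complete_set X m (S @ R) \<noteq> {}" by (rule cs_ne[OF assms(1,2)])
  have ss: "complete_set X m (S @ R) \<subseteq> complete_set X m S" by (rule cs_mono) (use assms in auto)
  show "V X m (compose_phi f n) (S @ R) \<le> V X m (compose_phi f n) S"
    unfolding V_def by (rule cSUP_subset_mono[OF ne cs_bdd ss]) (use assms in auto)
  have ne2: "complete_set X m S \<noteq> {}" by (rule cs_ne) (use assms in auto)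
  show "V X m (compose_phi f n) S \<le> V X m (compose_phi f n) (S @ R) + length R * n / m"
    unfolding V_def
  proof (rule cSUP_least[OF ne2])
    fix S' assume "S' \<in> complete_set X m S"
    then obtain S'' where S'': "S'' \<in> complete_set X m (S @ R)"
      "compose_phi f n S' \<le> compose_phi f n S'' + length R * n / m"
      using approx[of S' X m S R n f] assms by auto
    have "compose_phi f n S'' \<le> (SUP S'\<in>complete_set X m (S @ R). compose_phi f n S')"
      by (rule cSUP_upper[OF S''(1) cs_bdd]) (use assms in auto)
    thus "compose_phi f n S' \<le> (SUP S'\<in>complete_set X m (S @ R). compose_phi f n S') + length R * n / m"
      using S''(2) by linarith
  qed
qed



lemma binom_step:
  fixes g :: "nat \<Rightarrow> real"
  assumes p: "p \<in> {0..1}"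
  shows "measure_pmf.expectation (binomial_pmf (Suc n) p) g =
     p * measure_pmf.expectation (binomial_pmf n p) (\<lambda>k. g (Suc k)) +
     (1 - p) * measure_pmf.expectation (binomial_pmf n p) g"
proof -
  have eq: "binomial_pmf (Suc n) p = bernoulli_pmf p \<bind> (\<lambda>b. map_pmf (\<lambda>k. (if b then 1 else 0) + k) (binomial_pmf n p))"
    by (simp add: binomial_pmf_Suc[OF p] map_pmf_def)
  have "measure_pmf.expectation (binomial_pmf (Suc n) p) g =
    (\<Sum>b\<in>UNIV. pmf (bernoulli_pmf p) b *\<^sub>R measure_pmf.expectation (map_pmf (\<lambda>k. (if b then 1 else 0) + k) (binomial_pmf n p)) g)"
    unfolding eq by (rule pmf_expectation_bind) (use p in \<open>auto intro!: finite_imageI simp: finite_set_pmf_binomial_pmf\<close>)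
  also have "\<dots> = p * measure_pmf.expectation (binomial_pmf n p) (\<lambda>k. g (Suc k)) +
     (1 - p) * measure_pmf.expectation (binomial_pmf n p) g"
    using p by (simp add: UNIV_bool)
  finally show ?thesis .
qed

lemma binom_mean:
  assumes p: "p \<in> {0..1}"
  shows "measure_pmf.expectation (binomial_pmf n p) real = n * p"
proof (induction n)
  case 0 thus ?case using p by (simp add: binomial_pmf_0)
next
  case (Suc n)
  have "measure_pmf.expectation (binomial_pmf n p) (\<lambda>k. real (Suc k)) = measure_pmf.expectation (binomial_pmf n p) real + 1"
    using p by (simp add: Bochner_Integration.integral_add)
  thus ?case using binom_step[OF p, of n real] Suc by (simp add: algebra_simps)
qed

lemma binom_sq:
  assumes p: "p \<in> {0..1}"
  shows "measure_pmf.expectation (binomial_pmf n p) (\<lambda>k. real k ^ 2) = n * p * (1 - p) + (n * p) ^ 2"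
proof (induction n)
  case 0 thus ?case using p by (simp add: binomial_pmf_0)
next
  case (Suc n)
  let ?E = "measure_pmf.expectation (binomial_pmf n p)"
  have s: "measure_pmf.expectation (binomial_pmf (Suc n) p) (\<lambda>k. real k ^ 2) =
     p * ?E (\<lambda>k. real (Suc k) ^ 2) + (1 - p) * ?E (\<lambda>k. real k ^ 2)"
    by (rule binom_step[OF p])
  have "?E (\<lambda>k. real (Suc k) ^ 2) = ?E (\<lambda>k. real k ^ 2 + 2 * real k + 1)"
    by (simp add: power2_eq_square algebra_simps)
  also have "\<dots> = ?E (\<lambda>k. real k ^ 2 + 2 * real k) + 1"
    by (subst Bochner_Integration.integral_add) (use p in auto)
  also have "?E (\<lambda>k. real k ^ 2 + 2 * real k) = ?E (\<lambda>k. real k ^ 2) + ?E (\<lambda>k. 2 * real k)"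
    by (subst Bochner_Integration.integral_add) (use p in auto)
  also have "?E (\<lambda>k. 2 * real k) = 2 * ?E real" by simp
  finally have H: "?E (\<lambda>k. real (Suc k) ^ 2) = n * p * (1 - p) + (n * p) ^ 2 + 2 * (n * p) + 1"
    using Suc binom_mean[OF p] by simp
  show ?case unfolding s H Suc.IH by (simp add: power2_eq_square algebra_simps)
qed

lemma binom_var:
  assumes p: "p \<in> {0..1}"
  shows "measure_pmf.expectation (binomial_pmf n p) (\<lambda>k. (real k - n * p) ^ 2) = n * p * (1 - p)"
proof -
  let ?E = "measure_pmf.expectation (binomial_pmf n p)"
  have "?E (\<lambda>k. (real k - n * p) ^ 2) = ?E (\<lambda>k. (real k ^ 2 - 2 * (n * p) * real k) + (n*p)^2)"
    by (simp add: power2_eq_square algebra_simps)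
  also have "\<dots> = ?E (\<lambda>k. real k ^ 2 - 2 * (n * p) * real k) + (n*p)^2"
    by (subst Bochner_Integration.integral_add) (use p in auto)
  also have "?E (\<lambda>k. real k ^ 2 - 2 * (n * p) * real k) = ?E (\<lambda>k. real k ^ 2) - ?E (\<lambda>k. 2 * (n * p) * real k)"
    by (subst Bochner_Integration.integral_diff) (use p in auto)
  also have "?E (\<lambda>k. 2 * (n * p) * real k) = 2 * (n * p) * ?E real" by simp
  finally show ?thesis unfolding binom_sq[OF p] binom_mean[OF p] by (simp add: power2_eq_square algebra_simps)
qed

lemma abs_le_quad:
  fixes x a :: real assumes a: "a > 0"
  shows "\<bar>x\<bar> \<le> x ^ 2 / (2 * a) + a / 2"
proof -
  have "0 \<le> (\<bar>x\<bar> - a) ^ 2" by simp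
  also have "(\<bar>x\<bar> - a) ^ 2 = x ^ 2 + a ^ 2 - 2 * \<bar>x\<bar> * a" by (simp add: power2_diff)
  finally have "2 * a * \<bar>x\<bar> \<le> x ^ 2 + a ^ 2" by (simp add: mult.commute mult.left_commute)
  hence "2 * a * \<bar>x\<bar> / (2 * a) \<le> (x ^ 2 + a ^ 2) / (2 * a)" using a by (intro divide_right_mono) auto
  also have "(x ^ 2 + a ^ 2) / (2 * a) = x ^ 2 / (2 * a) + a ^ 2 / (2 * a)" by (rule add_divide_distrib)
  also have "a ^ 2 / (2 * a) = a / 2" using a by (simp add: power2_eq_square)
  finally show ?thesis using a by simp
qed

lemma binom_abs:
  assumes p: "p \<in> {0..1}" and n: "n > 0"
  shows "measure_pmf.expectation (binomial_pmf n p) (\<lambda>k. \<bar>real k - n * p\<bar>) \<le> sqrt n"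
proof -
  let ?E = "measure_pmf.expectation (binomial_pmf n p)"
  define a where "a = sqrt n"
  have a: "a > 0" using n by (simp add: a_def)
  have "?E (\<lambda>k. \<bar>real k - n * p\<bar>) \<le> ?E (\<lambda>k. (real k - n * p) ^ 2 / (2 * a) + a / 2)"
    by (rule integral_mono) (use p abs_le_quad[OF a] in auto)
  also have "\<dots> = ?E (\<lambda>k. (real k - n * p) ^ 2 / (2 * a)) + a / 2"
    by (subst Bochner_Integration.integral_add) (use p in auto)
  also have "?E (\<lambda>k. (real k - n * p) ^ 2 / (2 * a)) = ?E (\<lambda>k. (real k - n * p) ^ 2) / (2 * a)"
    by (rule integral_divide_zero)
  also have "\<dots> = n * p * (1 - p) / (2 * a)" by (simp only: binom_var[OF p])
  also have "n * p * (1 - p) / (2 * a) + a / 2 \<le> n / (2 * a) + a / 2"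
  proof -
    have "p * (1 - p) \<le> 1" using p by (intro mult_le_one) auto
    hence "real n * (p * (1 - p)) \<le> real n * 1" by (intro mult_left_mono) auto
    hence "n * p * (1 - p) \<le> n" by (simp only: mult.assoc mult_1_right)
    thus ?thesis using a by (intro add_right_mono divide_right_mono) auto
  qed
  also have "real n / (2 * a) = (real n / a) / 2" by simp
  also have "real n / a = a" unfolding a_def by (rule real_div_sqrt) simp
  also have "a / 2 + a / 2 = a" by simp
  finally show ?thesis by (simp add: a_def)
qed



lemma rep_take:
  assumes "z \<le> m"
  shows "replicate_pmf z D = map_pmf (take z) (replicate_pmf m D)"
proof -
  obtain k where m: "m = z + k" using assms le_Suc_ex by blast
  have "map_pmf (take z) (replicate_pmf m D) =
     replicate_pmf z D \<bind> (\<lambda>xs. replicate_pmf k D \<bind> (\<lambda>ys. return_pmf (take z (xs @ ys))))"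
    unfolding m replicate_pmf_distrib by (simp add: map_bind_pmf map_return_pmf)
  also have "\<dots> = replicate_pmf z D \<bind> (\<lambda>xs. return_pmf xs)"
  proof (rule bind_pmf_cong[OF refl])
    fix xs assume "xs \<in> set_pmf (replicate_pmf z D)"
    hence "length xs = z" by (simp add: set_replicate_pmf)
    thus "replicate_pmf k D \<bind> (\<lambda>ys. return_pmf (take z (xs @ ys))) = return_pmf xs"
      by (simp add: bind_pmf_const)
  qed
  finally show ?thesis by (simp add: bind_return_pmf')
qed

lemma floor_ceil_nat:
  assumes "0 \<le> \<eta>" "\<eta> \<le> 1"
  shows "nat \<lfloor>\<eta> * real m\<rfloor> = m - nat \<lceil>(1 - \<eta>) * real m\<rceil>"
    "nat \<lceil>(1 - \<eta>) * real m\<rceil> \<le> m"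
proof -
  have c: "\<lceil>(1 - \<eta>) * real m\<rceil> = int m - \<lfloor>\<eta> * real m\<rfloor>"
  proof -
    have "(1 - \<eta>) * real m = - (\<eta> * real m) + of_int (int m)" by (simp add: algebra_simps)
    hence "\<lceil>(1 - \<eta>) * real m\<rceil> = \<lceil>- (\<eta> * real m)\<rceil> + int m" by (simp only: ceiling_add_of_int)
    thus ?thesis by (simp add: ceiling_minus)
  qed
  have f0: "0 \<le> \<lfloor>\<eta> * real m\<rfloor>" using assms by simp
  have f1: "\<lfloor>\<eta> * real m\<rfloor> \<le> int m"
  proof -
    have "\<eta> * real m \<le> real m" using assms by (simp add: mult_left_le_one_le)
    thus ?thesis by (simp add: floor_le_iff)
  qed
  show "nat \<lfloor>\<eta> * real m\<rfloor> = m - nat \<lceil>(1 - \<eta>) * real m\<rceil>" using c f0 f1 by linarith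
  show "nat \<lceil>(1 - \<eta>) * real m\<rceil> \<le> m" using c f0 f1 by linarith
qed

lemma pmf_abs_bound:
  fixes h :: "'a \<Rightarrow> real"
  assumes "\<And>x. x \<in> set_pmf M \<Longrightarrow> \<bar>h x\<bar> \<le> c"
  shows "\<bar>measure_pmf.expectation M h\<bar> \<le> c"
proof -
  have int: "integrable M h"
    by (rule measure_pmf.integrable_const_bound[where B=c]) (use assms in \<open>auto intro!: AE_pmfI\<close>)
  have "\<bar>measure_pmf.expectation M h\<bar> \<le> measure_pmf.expectation M (\<lambda>x. \<bar>h x\<bar>)"
    using integral_norm_bound[of M h] by simp
  also have "\<dots> \<le> measure_pmf.expectation M (\<lambda>x. c)"
    by (rule integral_mono_AE) (use int assms in \<open>auto intro!: AE_pmfI\<close>)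
  finally show ?thesis by simp
qed

lemma pmf_integrable_bound:
  fixes h :: "'a \<Rightarrow> real"
  assumes "\<And>x. x \<in> set_pmf M \<Longrightarrow> \<bar>h x\<bar> \<le> c"
  shows "integrable M h"
  by (rule measure_pmf.integrable_const_bound[where B=c]) (use assms in \<open>auto intro!: AE_pmfI\<close>)

lemma V_take_diff:
  assumes Xne: "X \<noteq> {}" and L: "length L = m" "set L \<subseteq> X" and ab: "a \<le> b" "b \<le> m" and nm: "n \<le> m"
  shows "\<bar>V X m (compose_phi f n) (take a L) - V X m (compose_phi f n) (take b L)\<bar> \<le> real (b - a) * n / m"
proof -
  define R where "R = take (b - a) (drop a L)"
  have tb: "take b L = take a L @ R" unfolding R_def using ab take_add[of a "b - a" L] by simp
  have lR: "length R = b - a" unfolding R_def using ab L by simp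
  have "set (take b L) \<subseteq> X" using L set_take_subset by fastforce
  hence "V X m (compose_phi f n) (take a L @ R) \<le> V X m (compose_phi f n) (take a L) \<and>
         V X m (compose_phi f n) (take a L) \<le> V X m (compose_phi f n) (take a L @ R) + length R * n / m"
    using tb ab L nm lR by (intro V_diff[OF Xne]) auto
  thus ?thesis unfolding tb lR of_nat_mult by (simp add: abs_le_iff)
qed

lemma main_bound1:
  fixes X :: "'a set" and D :: "'a pmf"
  assumes eta: "0 < \<eta>" "\<eta> < 1" and DX: "set_pmf D \<subseteq> X" and nm: "n \<le> m"
  shows "\<bar>AdaptiveAddMax X \<eta> m (compose_phi f n) D - BinomialMax X \<eta> m (compose_phi f n) D\<bar>
     \<le> n / m * (\<Sum>k\<le>m. (real (m choose k) * (1 - \<eta>) ^ k * (1 - (1 - \<eta>)) ^ (m - k)) *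
                        \<bar>real k - real (nat \<lceil>(1 - \<eta>) * real m\<rceil>)\<bar>)"
proof -
  let ?g = "compose_phi f n"
  let ?p = "1 - \<eta>"
  define z0 where "z0 = nat \<lceil>(1 - \<eta>) * real m\<rceil>"
  define F where "F k = measure_pmf.expectation (replicate_pmf m D) (\<lambda>L. V X m ?g (take k L))" for k
  define w where "w k = real (m choose k) * ?p ^ k * (1 - ?p) ^ (m - k)" for k
  have p: "?p \<in> {0..1}" using eta by auto
  have Xne: "X \<noteq> {}" using DX set_pmf_not_empty[of D] by blast
  have z0m: "z0 \<le> m" using floor_ceil_nat eta unfolding z0_def by auto
  have supp: "length L = m \<and> set L \<subseteq> X" if "L \<in> set_pmf (replicate_pmf m D)" for L
    using DX that by (auto simp: set_replicate_pmf)
  have Vb: "\<bar>V X m ?g (take k L)\<bar> \<le> 1" if "L \<in> set_pmf (replicate_pmf m D)" "k \<le> m" for L k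
  proof -
    have "set (take k L) \<subseteq> X" using supp[OF that(1)] set_take_subset by fastforce
    thus ?thesis using V_bounds[OF Xne, of "take k L" m n f] supp[OF that(1)] that(2) nm by auto
  qed
  have Vd: "\<bar>V X m ?g (take k L) - V X m ?g (take k' L)\<bar> \<le> \<bar>real k - real k'\<bar> * n / m"
    if "L \<in> set_pmf (replicate_pmf m D)" "k \<le> m" "k' \<le> m" for L k k'
  proof (cases "k \<le> k'")
    case True
    thus ?thesis using V_take_diff[OF Xne _ _ True that(3) nm, of L f] supp[OF that(1)] by (simp add: of_nat_diff)
  next
    case False
    hence "\<bar>V X m ?g (take k' L) - V X m ?g (take k L)\<bar> \<le> real (k - k') * n / m"
      using V_take_diff[OF Xne _ _ _ that(2) nm, of L k' f] supp[OF that(1)] by simp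
    thus ?thesis using False by (simp add: of_nat_diff abs_minus_commute)
  qed
  have Fd: "\<bar>F z0 - F k\<bar> \<le> \<bar>real k - real z0\<bar> * n / m" if "k \<le> m" for k
  proof -
    have i1: "integrable (replicate_pmf m D) (\<lambda>L. V X m ?g (take z0 L))"
      by (rule pmf_integrable_bound[where c=1]) (use Vb z0m in auto)
    have i2: "integrable (replicate_pmf m D) (\<lambda>L. V X m ?g (take k L))"
      by (rule pmf_integrable_bound[where c=1]) (use Vb that in auto)
    have "F z0 - F k = measure_pmf.expectation (replicate_pmf m D) (\<lambda>L. V X m ?g (take z0 L) - V X m ?g (take k L))"
      unfolding F_def by (rule Bochner_Integration.integral_diff[OF i1 i2, symmetric])
    also have "\<bar>\<dots>\<bar> \<le> \<bar>real k - real z0\<bar> * n / m"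
      by (rule pmf_abs_bound) (use Vd z0m that in \<open>auto simp: abs_minus_commute\<close>)
    finally show ?thesis .
  qed
  have Ada: "AdaptiveAddMax X \<eta> m ?g D = F z0"
  proof -
    have "AdaptiveAddMax X \<eta> m ?g D = measure_pmf.expectation (replicate_pmf m D)
         (\<lambda>L. SUP S'\<in>add_set X \<eta> m (take z0 L). ?g S')"
      unfolding AdaptiveAddMax_def z0_def[symmetric] rep_take[OF z0m] by simp
    also have "\<dots> = F z0" unfolding F_def
    proof (rule integral_cong_AE)
      show "AE L in replicate_pmf m D. (SUP S'\<in>add_set X \<eta> m (take z0 L). ?g S') = V X m ?g (take z0 L)"
      proof (rule AE_pmfI)
        fix L assume "L \<in> set_pmf (replicate_pmf m D)"
        hence "length (take z0 L) = z0" using supp z0m by auto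
        hence "add_set X \<eta> m (take z0 L) = complete_set X m (take z0 L)"
          unfolding add_set_def complete_set_def using floor_ceil_nat(1)[of \<eta> m] eta z0_def by simp
        thus "(SUP S'\<in>add_set X \<eta> m (take z0 L). ?g S') = V X m ?g (take z0 L)" by (simp add: V_def)
      qed
    qed simp_all
    finally show ?thesis .
  qed
  have Bin: "BinomialMax X \<eta> m ?g D = (\<Sum>k\<le>m. w k * F k)"
    unfolding BinomialMax_def expectation_binomial_pmf'[OF p] w_def
  proof (intro sum.cong refl)
    fix k assume "k \<in> {..m}"
    hence "replicate_pmf k D = map_pmf (take k) (replicate_pmf m D)" by (intro rep_take) auto
    thus "(real (m choose k) * ?p ^ k * (1 - ?p) ^ (m - k)) *\<^sub>R
        measure_pmf.expectation (replicate_pmf k D) (\<lambda>S. SUP S'\<in>complete_set X m S. ?g S') =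
        real (m choose k) * ?p ^ k * (1 - ?p) ^ (m - k) * F k"
      by (simp add: F_def V_def)
  qed
  have wsum: "(\<Sum>k\<le>m. w k) = 1"
    using expectation_binomial_pmf'[OF p, of m "\<lambda>_. 1::real"] by (simp add: w_def)
  have w0: "w k \<ge> 0" for k using p by (simp add: w_def)
  have "AdaptiveAddMax X \<eta> m ?g D - BinomialMax X \<eta> m ?g D = (\<Sum>k\<le>m. w k * (F z0 - F k))"
    unfolding Ada Bin using wsum by (simp add: right_diff_distrib sum_subtractf sum_distrib_right[symmetric])
  also have "\<bar>\<dots>\<bar> \<le> (\<Sum>k\<le>m. \<bar>w k * (F z0 - F k)\<bar>)" by (rule sum_abs)
  also have "\<dots> \<le> (\<Sum>k\<le>m. w k * (\<bar>real k - real z0\<bar> * n / m))"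
  proof (rule sum_mono)
    fix k assume "k \<in> {..m}"
    hence "w k * \<bar>F z0 - F k\<bar> \<le> w k * (\<bar>real k - real z0\<bar> * n / m)"
      using w0 Fd by (intro mult_left_mono) auto
    thus "\<bar>w k * (F z0 - F k)\<bar> \<le> w k * (\<bar>real k - real z0\<bar> * n / m)"
      using w0[of k] by (simp add: abs_mult)
  qed
  also have "\<dots> = n / m * (\<Sum>k\<le>m. w k * \<bar>real k - real z0\<bar>)"
    by (simp add: sum_distrib_left algebra_simps)
  finally show ?thesis by (simp add: w_def z0_def)
qed

lemma E_bound:
  assumes eta: "0 < \<eta>" "\<eta> < 1" and m: "m > 0"
  shows "(\<Sum>k\<le>m. (real (m choose k) * (1 - \<eta>) ^ k * (1 - (1 - \<eta>)) ^ (m - k)) *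
                        \<bar>real k - real (nat \<lceil>(1 - \<eta>) * real m\<rceil>)\<bar>) \<le> sqrt m + 1"
proof -
  let ?p = "1 - \<eta>"
  define w where "w k = real (m choose k) * ?p ^ k * (1 - ?p) ^ (m - k)" for k
  have p: "?p \<in> {0..1}" using eta by auto
  have w0: "w k \<ge> 0" for k using p by (simp add: w_def)
  have wsum: "(\<Sum>k\<le>m. w k) = 1"
    using expectation_binomial_pmf'[OF p, of m "\<lambda>_. 1::real"] by (simp add: w_def)
  define x where "x = ?p * real m"
  have x0: "x \<ge> 0" using eta by (simp add: x_def)
  have z: "real (nat \<lceil>x\<rceil>) = of_int \<lceil>x\<rceil>" using x0 by simp
  have c1: "x \<le> of_int \<lceil>x\<rceil>" by (rule le_of_int_ceiling)
  have c2: "of_int \<lceil>x\<rceil> < x + 1" using ceiling_correct[of x] by linarith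
  have pt: "\<bar>real k - real (nat \<lceil>x\<rceil>)\<bar> \<le> \<bar>real k - real m * ?p\<bar> + 1" for k
    using c1 c2 z unfolding x_def by (simp add: mult.commute abs_le_iff) linarith
  have "(\<Sum>k\<le>m. w k * \<bar>real k - real (nat \<lceil>x\<rceil>)\<bar>) \<le> (\<Sum>k\<le>m. w k * (\<bar>real k - real m * ?p\<bar> + 1))"
    by (intro sum_mono mult_left_mono pt w0)
  also have "\<dots> = (\<Sum>k\<le>m. w k * \<bar>real k - real m * ?p\<bar>) + (\<Sum>k\<le>m. w k)"
    by (simp add: distrib_left sum.distrib)
  also have "(\<Sum>k\<le>m. w k * \<bar>real k - real m * ?p\<bar>) = measure_pmf.expectation (binomial_pmf m ?p) (\<lambda>k. \<bar>real k - real m * ?p\<bar>)"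
    by (simp add: expectation_binomial_pmf'[OF p] w_def)
  also have "\<dots> \<le> sqrt m" by (rule binom_abs[OF p m])
  finally show ?thesis using wsum by (simp add: w_def x_def)
qed

lemma final_arith:
  fixes n m :: nat and \<epsilon> :: real
  assumes e: "0 < \<epsilon>" "\<epsilon> < 1" and n: "n > 0" and mC: "real m \<ge> 4 * real n ^ 2 / \<epsilon> ^ 2"
  shows "n \<le> m" "m > 0" "n / m * (sqrt m + 1) \<le> \<epsilon>"
proof -
  define s where "s = sqrt (real m)"
  have "(2 * real n / \<epsilon>) ^ 2 = 4 * real n ^ 2 / \<epsilon> ^ 2" by (simp add: power_divide power_mult_distrib)
  hence "(2 * real n / \<epsilon>) ^ 2 \<le> real m" using mC by simp
  hence s1: "2 * real n / \<epsilon> \<le> s" unfolding s_def by (simp add: real_le_rsqrt)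
  have "2 * real n \<le> 2 * real n / \<epsilon>" using e n by (simp add: le_divide_eq)
  hence s2: "2 * real n \<le> s" using s1 by linarith
  have n1: "real n \<ge> 1" using n by simp
  have sp: "s \<ge> 2" using s2 n1 by linarith
  have ms: "real m = s * s" unfolding s_def by simp
  have ss: "s \<le> s * s"
  proof -
    have "s * 1 \<le> s * s" using sp by (intro mult_left_mono) auto
    thus ?thesis by simp
  qed
  have "real n \<le> s * s" using s2 sp n1 ss by linarith
  thus "n \<le> m" using ms by simp
  show "m > 0" using sp ms by (cases m) auto
  have A: "real n / s \<le> \<epsilon> / 2"
  proof -
    have "real n * 2 \<le> \<epsilon> * s" using s1 e by (simp add: field_simps)
    thus ?thesis using sp by (simp add: field_simps)
  qed
  have B: "real n / (s * s) \<le> real n / s"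
    using sp ss by (intro divide_left_mono) auto
  have "n / m * (sqrt m + 1) = real n / s + real n / (s * s)"
    using sp unfolding ms by (simp add: s_def[symmetric] field_simps)
  thus "n / m * (sqrt m + 1) \<le> \<epsilon>" using A B by linarith
qed

theorem mainTheorem18:
  shows "\<exists>C::real. C > 0 \<and>
    (\<forall>(X::nat set) (f::nat list \<Rightarrow> bool) (n::nat) (\<epsilon>::real) (\<eta>::real) (D::nat pmf) (m::nat).
       0 < \<epsilon> \<longrightarrow> \<epsilon> < 1 \<longrightarrow> 0 < \<eta> \<longrightarrow> \<eta> < 1 \<longrightarrow>
       set_pmf D \<subseteq> X \<longrightarrow>
       real m \<ge> C * real n ^ 2 / \<epsilon> ^ 2 \<longrightarrow>
       \<bar>AdaptiveAddMax X \<eta> m (compose_phi f n) D - BinomialMax X \<eta> m (compose_phi f n) D\<bar> \<le> \<epsilon>)"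
proof (intro exI[of _ 4] conjI allI impI)
  fix X :: "nat set" and f :: "nat list \<Rightarrow> bool" and n :: nat and \<epsilon> \<eta> :: real and D :: "nat pmf" and m :: nat
  assume e: "0 < \<epsilon>" "\<epsilon> < 1" and eta: "0 < \<eta>" "\<eta> < 1" and DX: "set_pmf D \<subseteq> X"
    and mC: "real m \<ge> 4 * real n ^ 2 / \<epsilon> ^ 2"
  let ?S = "\<Sum>k\<le>m. (real (m choose k) * (1 - \<eta>) ^ k * (1 - (1 - \<eta>)) ^ (m - k)) *
                        \<bar>real k - real (nat \<lceil>(1 - \<eta>) * real m\<rceil>)\<bar>"
  show "\<bar>AdaptiveAddMax X \<eta> m (compose_phi f n) D - BinomialMax X \<eta> m (compose_phi f n) D\<bar> \<le> \<epsilon>"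
  proof (cases "n = 0")
    case True
    thus ?thesis using main_bound1[OF eta DX, of n m f] e by simp
  next
    case False
    hence n: "n > 0" by simp
    note fa = final_arith[OF e n mC]
    have "\<bar>AdaptiveAddMax X \<eta> m (compose_phi f n) D - BinomialMax X \<eta> m (compose_phi f n) D\<bar> \<le> n / m * ?S"
      by (rule main_bound1[OF eta DX fa(1)])
    also have "\<dots> \<le> n / m * (sqrt m + 1)"
      by (rule mult_left_mono[OF E_bound[OF eta fa(2)]]) simp
    also have "\<dots> \<le> \<epsilon>" by (rule fa(3))
    finally show ?thesis .
  qed
qed (simp)

end
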